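(* Let $X$ be a real Banach space and $G$ an amenable Hausdorff topological group which is locally compact or SIN, acting continuously on $X$ by affine isometries, and let $M$ be a bi-invariant mean on $G$. Define $R_G:X\to X^{**}$ by $$R_G(x)(x^* ):=M\big(g\mapsto x^*(\pi(g) x)\big),\qquad x\in X,\ x^*\in X^*.$$ Then $R_G$ is a well-defined linear operator with $\|R_G\|\le 1$, and: (1) for every $g\in G$ and $x\in X$, $\pi(g)R_G(x)=R_G(x)=R_G(\pi(g)x)$; (2) $R_G[X]\cap \kappa_X(X)=\kappa_X(I_G)$ where $I_G:=\{x\in X:\pi(g)x=x\text{ for all }g\in G\}$, and $R_G(x)=\kappa_X(x)$ for every $x\in I_G$; (3) $\ker R_G\cap I_G=\{0\}$ and the canonical projection of $\ker R_G+I_G$ onto $I_G$ along $\ker R_G$ has norm at most $1$; (4) the map $\widetilde{P_G}:=R_G^*\circ\kappa_{X^*}:X^*\to X^*$ is a projection of norm at most $1$ with $\widetilde{P_G}[X^*]=\widetilde{I_G}:=\{x^*\in X^*:\pi(g)x^*=x^*\text{ for all }g\in G\}$; (5) $\ker R_G=(\widetilde{I_G})_\perp$. Moreover: (a) if some (equivalently every) orbit of the affine action is bounded, then $R_G(gx)=R_G(x)$ and $\widetilde{P_G}(x^* )(gx)=\widetilde{P_G}(x^* )(x)$ for all $x\in X$, $x^*\in X^*$, $g\in G$; (b) if $G$ is compact (and $M$ is integration against the bi-invariant Haar probability measure $\mu$), then $R_G$ takes values in $\kappa_X(X)$, and, identifying $X$ with $\kappa_X(X)$, $R_G:X\to X$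 is a projection onto $I_G$ of norm at most $1$ given by the Bochner integral $R_G(x)=\int_G\pi(g)x\,d\mu(g)$.
   Context: $\kappa_X:X\to X^{**}$ is the canonical embedding. For $A\subset X^*$, $A_\perp=\{x\in X: a(x)=0\ \forall a\in A\}$. An action of $G$ on $X$ by affine isometries is written $(g,x)\mapsto gx$; its linear part is $\pi(g)x:=gx-g0$, which is an action of $G$ by linear surjective isometries; the dual action on $X^*$ is $(\pi(g)x^* )(x)=x^*(\pi(g^{-1})x)$, and on $X^{**}$ likewise $(\pi(g)\zeta)(x^* )=\zeta(\pi(g^{-1})x^* )$. Spaces of functions on $G$: $(g\cdot f)(h)=f(g^{-1}h)$, $(f\cdot g)(h)=f(hg^{-1})$; $\mathcal{C}^b_{lu}(G)$ (resp. $\mathcal{C}^b_{ru}(G)$) is the set of bounded $f$ with $x\mapsto x^{-1}\cdot f$ (resp. $x\mapsto f\cdot x^{-1}$) norm-continuous into $\ell_\infty(G)$, $\mathcal{C}^b_u(G)$ their intersection. $G$ is amenable if there is a left-invariant mean on $\mathcal{C}^b_{lu}(G)$ (a positive linear functional $M$ with $M(1)=1$ and $M(g\cdot f)=M(f)$). A bi-invariant mean is a positive linear functional $M$ with $M(1)=1$ and $M(g\cdot f)=M(f\cdot g)=M(f)$ for all $g$; it is defined on $\mathcal{C}^b_u(G)$ when $G$ is SIN, and on $L_\infty(G)$ (w.r.t. left Haar measure) when $G$ is locally compact amenable. $G$ is SIN if every neighborhood $U$ of $e$ contains a neighborhood $V$ of $e$ with $gVg^{-1}=V$ for all $g$. 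*)

theory Defs
  imports "HOL-Analysis.Analysis"
begin

section \<open>Topological groups (group written additively, not assumed commutative)\<close>

definition top_group :: "('g::{group_add,topological_space}) itself \<Rightarrow> bool" where
  "top_group _ \<longleftrightarrow> continuous_on UNIV (\<lambda>p::'g\<times>'g. fst p + snd p) \<and> continuous_on UNIV (uminus :: 'g \<Rightarrow> 'g)"

definition is_nbhd_of :: "'a::topological_space set \<Rightarrow> 'a \<Rightarrow> bool" where
  "is_nbhd_of V a \<longleftrightarrow> (\<exists>W. open W \<and> a \<in> W \<and> W \<subseteq> V)"

definition SIN_group :: "('g::{group_add,topological_space}) itself \<Rightarrow> bool" where
  "SIN_group _ \<longleftrightarrow> (\<forall>U::'g set. is_nbhd_of U 0 \<longrightarrow>
      (\<exists>V. is_nbhd_of V 0 \<and> V \<subseteq> U \<and> (\<forall>g. (\<lambda>v. g + v + - g) ` V = V)))"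

definition lshift :: "'g::group_add \<Rightarrow> ('g \<Rightarrow> real) \<Rightarrow> ('g \<Rightarrow> real)" where
  "lshift g f = (\<lambda>h. f (- g + h))"
definition rshift :: "('g \<Rightarrow> real) \<Rightarrow> 'g::group_add \<Rightarrow> ('g \<Rightarrow> real)" where
  "rshift f g = (\<lambda>h. f (h + - g))"

definition sup_norm_continuous :: "('g::topological_space \<Rightarrow> 'g \<Rightarrow> real) \<Rightarrow> bool" where
  "sup_norm_continuous F \<longleftrightarrow> (\<forall>x0 e. e > 0 \<longrightarrow>
      (\<forall>\<^sub>F x in nhds x0. \<forall>h. \<bar>F x h - F x0 h\<bar> \<le> e))"

definition Cb_lu :: "('g::{group_add,topological_space} \<Rightarrow> real) set" where
  "Cb_lu = {f. bounded (range f) \<and> sup_norm_continuous (\<lambda>x. lshift (- x) f)}"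
definition Cb_ru :: "('g::{group_add,topological_space} \<Rightarrow> real) set" where
  "Cb_ru = {f. bounded (range f) \<and> sup_norm_continuous (\<lambda>x. rshift f (- x))}"
definition Cb_u :: "('g::{group_add,topological_space} \<Rightarrow> real) set" where
  "Cb_u = Cb_lu \<inter> Cb_ru"

definition mean_on :: "('g \<Rightarrow> real) set \<Rightarrow> (('g \<Rightarrow> real) \<Rightarrow> real) \<Rightarrow> bool" where
  "mean_on D M \<longleftrightarrow>
     (\<forall>f\<in>D. \<forall>h\<in>D. \<forall>a b. M (\<lambda>t. a * f t + b * h t) = a * M f + b * M h) \<and>
     (\<forall>f\<in>D. (\<forall>t. f t \<ge> 0) \<longrightarrow> M f \<ge> 0) \<and>
     M (\<lambda>_. 1) = 1"

definition left_invariant_mean_on :: "('g::group_add \<Rightarrow> real) set \<Rightarrow> (('g \<Rightarrow> real) \<Rightarrow> real) \<Rightarrow> bool" where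
  "left_invariant_mean_on D M \<longleftrightarrow> mean_on D M \<and> (\<forall>g. \<forall>f\<in>D. M (lshift g f) = M f)"

definition bi_invariant_mean_on :: "('g::group_add \<Rightarrow> real) set \<Rightarrow> (('g \<Rightarrow> real) \<Rightarrow> real) \<Rightarrow> bool" where
  "bi_invariant_mean_on D M \<longleftrightarrow> mean_on D M \<and>
     (\<forall>g. \<forall>f\<in>D. M (lshift g f) = M f \<and> M (rshift f g) = M f)"

definition amenable :: "('g::{group_add,topological_space}) itself \<Rightarrow> bool" where
  "amenable _ \<longleftrightarrow> (\<exists>M. left_invariant_mean_on (Cb_lu :: ('g \<Rightarrow> real) set) M)"

definition left_Haar :: "'g::{group_add,topological_space} measure \<Rightarrow> bool" where
  "left_Haar \<mu> \<longleftrightarrow> space \<mu> = UNIV \<and> sets \<mu> = sets borel \<and>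
     (\<forall>g. \<forall>A\<in>sets borel. emeasure \<mu> ((\<lambda>h. g + h) ` A) = emeasure \<mu> A) \<and>
     (\<forall>K. compact K \<longrightarrow> emeasure \<mu> K < \<infinity>) \<and>
     (\<forall>U. open U \<and> U \<noteq> {} \<longrightarrow> emeasure \<mu> U > 0) \<and>
     (\<forall>A\<in>sets borel. emeasure \<mu> A = (INF U\<in>{U. open U \<and> A \<subseteq> U}. emeasure \<mu> U)) \<and>
     (\<forall>U. open U \<longrightarrow> emeasure \<mu> U = (SUP K\<in>{K. compact K \<and> K \<subseteq> U}. emeasure \<mu> K))"

definition Haar_probability :: "'g::{group_add,topological_space} measure \<Rightarrow> bool" where
  "Haar_probability \<mu> \<longleftrightarrow> left_Haar \<mu> \<and> emeasure \<mu> UNIV = 1 \<and>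
     (\<forall>g. \<forall>A\<in>sets borel. emeasure \<mu> ((\<lambda>h. h + g) ` A) = emeasure \<mu> A)"

text \<open>Bounded Borel functions, representing (a subspace of) L-infinity(G); a mean on
  L-infinity is required to respect equality almost everywhere.\<close>
definition Linf_repr :: "'g::topological_space measure \<Rightarrow> ('g \<Rightarrow> real) set" where
  "Linf_repr \<mu> = {f. bounded (range f) \<and> f \<in> borel_measurable \<mu>}"

definition respects_ae :: "'g measure \<Rightarrow> ('g \<Rightarrow> real) set \<Rightarrow> (('g \<Rightarrow> real) \<Rightarrow> real) \<Rightarrow> bool" where
  "respects_ae \<mu> D M \<longleftrightarrow> (\<forall>f\<in>D. \<forall>h\<in>D. (AE t in \<mu>. f t = h t) \<longrightarrow> M f = M h)"

definition simple_fn :: "'g measure \<Rightarrow> ('g \<Rightarrow> 'x::real_normed_vector) \<Rightarrow> bool" where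
  "simple_fn \<mu> s \<longleftrightarrow> finite (range s) \<and> (\<forall>y. s -` {y} \<inter> space \<mu> \<in> sets \<mu>) \<and>
     (\<forall>y. y \<noteq> 0 \<longrightarrow> emeasure \<mu> (s -` {y} \<inter> space \<mu>) < \<infinity>)"

definition simple_int :: "'g measure \<Rightarrow> ('g \<Rightarrow> 'x::real_normed_vector) \<Rightarrow> 'x" where
  "simple_int \<mu> s = (\<Sum>y\<in>range s. measure \<mu> (s -` {y} \<inter> space \<mu>) *\<^sub>R y)"

definition has_bochner_int :: "'g measure \<Rightarrow> ('g \<Rightarrow> 'x::real_normed_vector) \<Rightarrow> 'x \<Rightarrow> bool" where
  "has_bochner_int \<mu> f v \<longleftrightarrow> (\<exists>s. (\<forall>n. simple_fn \<mu> (s n)) \<and>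
      (AE t in \<mu>. (\<lambda>n. s n t) \<longlonglongrightarrow> f t) \<and>
      (\<lambda>n. \<integral>\<^sup>+ t. ennreal (norm (s n t - f t)) \<partial>\<mu>) \<longlonglongrightarrow> 0 \<and>
      (\<lambda>n. simple_int \<mu> (s n)) \<longlonglongrightarrow> v)"

definition affine_isometric_action :: "('g::{group_add,topological_space} \<Rightarrow> 'x::real_normed_vector \<Rightarrow> 'x) \<Rightarrow> bool" where
  "affine_isometric_action act \<longleftrightarrow>
     (\<forall>x. act 0 x = x) \<and> (\<forall>g h x. act (g + h) x = act g (act h x)) \<and>
     (\<forall>g. linear (\<lambda>x. act g x - act g 0)) \<and>
     (\<forall>g x y. dist (act g x) (act g y) = dist x y) \<and>
     continuous_on UNIV (\<lambda>p. act (fst p) (snd p))"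

definition lin_part :: "('g \<Rightarrow> 'x::real_normed_vector \<Rightarrow> 'x) \<Rightarrow> 'g \<Rightarrow> 'x \<Rightarrow> 'x" where
  "lin_part act g x = act g x - act g 0"

definition fixed_pts :: "('g \<Rightarrow> 'x::real_normed_vector \<Rightarrow> 'x) \<Rightarrow> 'x set" where
  "fixed_pts act = {x. \<forall>g. lin_part act g x = x}"

definition dual_act :: "('g::group_add \<Rightarrow> 'x::real_normed_vector \<Rightarrow> 'x) \<Rightarrow> 'g \<Rightarrow> ('x \<Rightarrow>\<^sub>L real) \<Rightarrow> ('x \<Rightarrow>\<^sub>L real)" where
  "dual_act act g xs = Blinfun (\<lambda>x. blinfun_apply xs (lin_part act (- g) x))"

definition bidual_act :: "('g::group_add \<Rightarrow> 'x::real_normed_vector \<Rightarrow> 'x) \<Rightarrow> 'g \<Rightarrow>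
    (('x \<Rightarrow>\<^sub>L real) \<Rightarrow>\<^sub>L real) \<Rightarrow> (('x \<Rightarrow>\<^sub>L real) \<Rightarrow>\<^sub>L real)" where
  "bidual_act act g z = Blinfun (\<lambda>xs. blinfun_apply z (dual_act act (- g) xs))"

definition dual_fixed_pts :: "('g::group_add \<Rightarrow> 'x::real_normed_vector \<Rightarrow> 'x) \<Rightarrow> ('x \<Rightarrow>\<^sub>L real) set" where
  "dual_fixed_pts act = {xs. \<forall>g. dual_act act g xs = xs}"

definition kappa :: "'x::real_normed_vector \<Rightarrow> ('x \<Rightarrow>\<^sub>L real) \<Rightarrow>\<^sub>L real" where
  "kappa x = Blinfun (\<lambda>f. blinfun_apply f x)"

definition pre_annihilator :: "('x::real_normed_vector \<Rightarrow>\<^sub>L real) set \<Rightarrow> 'x set" where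
  "pre_annihilator A = {x. \<forall>a\<in>A. blinfun_apply a x = 0}"

text \<open>P~ = R^* o kappa_{X^*}:  (R^*(kappa xs)) = (kappa xs) o R.\<close>
definition Ptilde :: "('x::real_normed_vector \<Rightarrow>\<^sub>L (('x \<Rightarrow>\<^sub>L real) \<Rightarrow>\<^sub>L real)) \<Rightarrow> ('x \<Rightarrow>\<^sub>L real) \<Rightarrow> ('x \<Rightarrow>\<^sub>L real)" where
  "Ptilde R xs = kappa xs o\<^sub>L R"

end

theory Submission
  imports Defs
begin


definition hbF :: "'x::real_normed_vector \<Rightarrow> ('x \<times> real) set set" where
  "hbF x0 = {H. (x0, norm x0) \<in> H \<and> (\<forall>p\<in>H. \<forall>q\<in>H. (fst p + fst q, snd p + snd q) \<in> H) \<and>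
      (\<forall>p\<in>H. \<forall>c. (c *\<^sub>R fst p, c * snd p) \<in> H) \<and> (\<forall>p\<in>H. snd p \<le> norm (fst p))}"

lemma hbF_D:
  assumes "H \<in> hbF x0"
  shows "(x0, norm x0) \<in> H" "\<And>x a y b. (x,a)\<in>H \<Longrightarrow> (y,b)\<in>H \<Longrightarrow> (x+y, a+b) \<in> H"
    "\<And>x a c. (x,a)\<in>H \<Longrightarrow> (c *\<^sub>R x, c*a) \<in> H" "\<And>x a. (x,a)\<in>H \<Longrightarrow> a \<le> norm x"
proof -
  have A: "(x0, norm x0) \<in> H" and B: "\<forall>p\<in>H. \<forall>q\<in>H. (fst p + fst q, snd p + snd q) \<in> H"
    and C: "\<forall>p\<in>H. \<forall>c. (c *\<^sub>R fst p, c * snd p) \<in> H" and E: "\<forall>p\<in>H. snd p \<le> norm (fst p)"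
    using assms unfolding hbF_def by blast+
  show "(x0, norm x0) \<in> H" by (rule A)
  show "\<And>x a y b. (x,a)\<in>H \<Longrightarrow> (y,b)\<in>H \<Longrightarrow> (x+y, a+b) \<in> H"
  proof -
    fix x a y b assume "(x,a)\<in>H" "(y,b)\<in>H"
    from B[rule_format, OF this] show "(x+y, a+b) \<in> H" by simp
  qed
  show "\<And>x a c. (x,a)\<in>H \<Longrightarrow> (c *\<^sub>R x, c*a) \<in> H"
  proof -
    fix x a c assume "(x,a)\<in>H"
    from C[rule_format, OF this, of c] show "(c *\<^sub>R x, c*a) \<in> H" by simp
  qed
  show "\<And>x a. (x,a)\<in>H \<Longrightarrow> a \<le> norm x"
  proof -
    fix x a assume "(x,a)\<in>H"
    from E[rule_format, OF this] show "a \<le> norm x" by simp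
  qed
qed

lemma hbF_zero: "H \<in> hbF x0 \<Longrightarrow> (0, 0) \<in> H"
  using hbF_D(3)[of H x0 x0 "norm x0" 0] hbF_D(1)[of H x0] by simp

lemma hbF_unique:
  assumes H: "H \<in> hbF x0" and "(x,a)\<in>H" "(x,b)\<in>H" shows "a = b"
proof -
  have "(x + (-1) *\<^sub>R x, a + (-1)*b) \<in> H" using hbF_D(2,3)[OF H] assms by blast
  then have 1: "a - b \<le> 0" using hbF_D(4)[OF H] by fastforce
  have "(x + (-1) *\<^sub>R x, b + (-1)*a) \<in> H" using hbF_D(2,3)[OF H] assms by blast
  then have 2: "b - a \<le> 0" using hbF_D(4)[OF H] by fastforce
  from 1 2 show ?thesis by simp
qed

lemma hbF_extend:
  assumes H: "H \<in> hbF x0" and y: "\<forall>a. (y,a) \<notin> H"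
  shows "\<exists>H'\<in>hbF x0. H \<subseteq> H' \<and> H' \<noteq> H"
proof -
  define S where "S = {a - norm (x - y) | x a. (x,a)\<in>H}"
  define c where "c = Sup S"
  have key: "a - norm (x - y) \<le> norm (z + y) - b" if "(x,a)\<in>H" "(z,b)\<in>H" for x a z b
  proof -
    have "a + b \<le> norm (x + z)" using hbF_D(2,4)[OF H] that by blast
    also have "x + z = (x - y) + (z + y)" by simp
    also have "norm \<dots> \<le> norm (x - y) + norm (z + y)" by (rule norm_triangle_ineq)
    finally show ?thesis by simp
  qed
  have Sne: "S \<noteq> {}" using hbF_zero[OF H] unfolding S_def by blast
  have P1: "a - norm (x - y) \<le> c" if "(x,a)\<in>H" for x a
    unfolding c_def
  proof (rule cSup_upper)
    show "a - norm (x - y) \<in> S" using that unfolding S_def by blast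
    show "bdd_above S" unfolding bdd_above_def S_def
      using key[OF _ hbF_zero[OF H]] by auto
  qed
  have P2: "c \<le> norm (z + y) - b" if "(z,b)\<in>H" for z b
    unfolding c_def using Sne key[OF _ that] unfolding S_def
    by (intro cSup_least) auto
  define H' where "H' = {(x + t *\<^sub>R y, a + t*c) | x a t. (x,a)\<in>H}"
  have bound: "a + t*c \<le> norm (x + t *\<^sub>R y)" if "(x,a)\<in>H" for x a t
  proof (cases "t = 0")
    case True then show ?thesis using hbF_D(4)[OF H that] by simp
  next
    case False
    show ?thesis
    proof (cases "t > 0")
      case True
      have "((1/t) *\<^sub>R x, (1/t)*a) \<in> H" using hbF_D(3)[OF H that] .
      from P2[OF this] have "c \<le> norm ((1/t) *\<^sub>R x + y) - (1/t)*a" .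
      then have "t*c \<le> t * (norm ((1/t) *\<^sub>R x + y) - (1/t)*a)" using True
        by (intro mult_left_mono) auto
      then have "t*c \<le> t * norm ((1/t) *\<^sub>R x + y) - a" using True
        by (simp add: right_diff_distrib)
      also have "t * norm ((1/t) *\<^sub>R x + y) = norm (t *\<^sub>R ((1/t) *\<^sub>R x + y))"
        using True by simp
      also have "t *\<^sub>R ((1/t) *\<^sub>R x + y) = x + t *\<^sub>R y" using True by (simp add: scaleR_add_right)
      finally show ?thesis by simp
    next
      case nt: False
      define s where "s = - t"
      have s: "s > 0" using nt False unfolding s_def by simp
      have "((1/s) *\<^sub>R x, (1/s)*a) \<in> H" using hbF_D(3)[OF H that] .
      from P1[OF this] have "(1/s)*a - norm ((1/s) *\<^sub>R x - y) \<le> c" .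
      then have "s * ((1/s)*a - norm ((1/s) *\<^sub>R x - y)) \<le> s * c" using s
        by (simp add: mult_left_mono)
      then have "a - s * norm ((1/s) *\<^sub>R x - y) \<le> s * c" using s by (simp add: algebra_simps)
      also have "s * norm ((1/s) *\<^sub>R x - y) = norm (s *\<^sub>R ((1/s) *\<^sub>R x - y))"
        using s by simp
      also have "s *\<^sub>R ((1/s) *\<^sub>R x - y) = x + t *\<^sub>R y" using s unfolding s_def
        by (simp add: scaleR_diff_right)
      finally show ?thesis unfolding s_def by simp
    qed
  qed
  have H'F: "H' \<in> hbF x0"
    unfolding hbF_def
  proof (intro CollectI conjI ballI allI)
    have "(x0, norm x0) = (x0 + 0 *\<^sub>R y, norm x0 + 0*c)" by simp
    then show "(x0, norm x0) \<in> H'" unfolding H'_def using hbF_D(1)[OF H] by blast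
  next
    fix p q assume "p \<in> H'" "q \<in> H'"
    then obtain x a t z b u where p: "p = (x + t *\<^sub>R y, a + t*c)" "(x,a)\<in>H"
      and q: "q = (z + u *\<^sub>R y, b + u*c)" "(z,b)\<in>H" unfolding H'_def by blast
    have "(x+z, a+b) \<in> H" using hbF_D(2)[OF H p(2) q(2)] .
    moreover have "fst p + fst q = (x+z) + (t+u) *\<^sub>R y" "snd p + snd q = (a+b) + (t+u)*c"
      using p q by (auto simp: algebra_simps scaleR_add_left)
    ultimately show "(fst p + fst q, snd p + snd q) \<in> H'" unfolding H'_def by force
  next
    fix p r assume "p \<in> H'"
    then obtain x a t where p: "p = (x + t *\<^sub>R y, a + t*c)" "(x,a)\<in>H" unfolding H'_def by blast
    have "(r *\<^sub>R x, r*a) \<in> H" using hbF_D(3)[OF H p(2)] .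
    moreover have "r *\<^sub>R fst p = r *\<^sub>R x + (r*t) *\<^sub>R y" "r * snd p = r*a + (r*t)*c"
      using p by (auto simp: algebra_simps scaleR_add_right)
    ultimately show "(r *\<^sub>R fst p, r * snd p) \<in> H'" unfolding H'_def by force
  next
    fix p assume "p \<in> H'"
    then obtain x a t where p: "p = (x + t *\<^sub>R y, a + t*c)" "(x,a)\<in>H" unfolding H'_def by blast
    then show "snd p \<le> norm (fst p)" using bound by simp
  qed
  have sub: "H \<subseteq> H'" unfolding H'_def by (force intro: exI[of _ 0])
  have "(y, c) = (0 + 1 *\<^sub>R y, 0 + 1*c)" by simp
  then have "(y, c) \<in> H'" unfolding H'_def using hbF_zero[OF H] by blast
  then have "H' \<noteq> H" using y by blast
  with H'F sub show ?thesis by blast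
qed

lemma hahn_banach_norm:
  fixes x0 :: "'x::real_normed_vector"
  shows "\<exists>f :: 'x \<Rightarrow>\<^sub>L real. norm f \<le> 1 \<and> blinfun_apply f x0 = norm x0"
proof -
  define H0 where "H0 = {(c *\<^sub>R x0, c * norm x0) | c. True}"
  have H0F: "H0 \<in> hbF x0" unfolding hbF_def
  proof (intro CollectI conjI ballI allI)
    have "(x0, norm x0) = (1 *\<^sub>R x0, 1 * norm x0)" by simp
    then show "(x0, norm x0) \<in> H0" unfolding H0_def by blast
  next
    fix p q assume "p \<in> H0" "q \<in> H0"
    then obtain a b where "p = (a *\<^sub>R x0, a * norm x0)" "q = (b *\<^sub>R x0, b * norm x0)"
      unfolding H0_def by blast
    then have "(fst p + fst q, snd p + snd q) = ((a+b) *\<^sub>R x0, (a+b) * norm x0)"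
      by (simp add: algebra_simps scaleR_add_left)
    then show "(fst p + fst q, snd p + snd q) \<in> H0" unfolding H0_def by blast
  next
    fix p r assume "p \<in> H0"
    then obtain a where "p = (a *\<^sub>R x0, a * norm x0)" unfolding H0_def by blast
    then have "(r *\<^sub>R fst p, r * snd p) = ((r*a) *\<^sub>R x0, (r*a) * norm x0)" by simp
    then show "(r *\<^sub>R fst p, r * snd p) \<in> H0" unfolding H0_def by blast
  next
    fix p assume "p \<in> H0"
    then obtain a where "p = (a *\<^sub>R x0, a * norm x0)" unfolding H0_def by blast
    then show "snd p \<le> norm (fst p)" by (simp add: mult_right_mono)
  qed
  have "\<forall>C\<in>chains (hbF x0). \<exists>U\<in>hbF x0. \<forall>X\<in>C. X \<subseteq> U"
  proof
    fix C assume C: "C \<in> chains (hbF x0)"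
    show "\<exists>U\<in>hbF x0. \<forall>X\<in>C. X \<subseteq> U"
    proof (cases "C = {}")
      case True then show ?thesis using H0F by blast
    next
      case False
      have CF: "C \<subseteq> hbF x0" and ch: "\<And>A B. A\<in>C \<Longrightarrow> B\<in>C \<Longrightarrow> A \<subseteq> B \<or> B \<subseteq> A"
        using C unfolding chains_def chain_subset_def by auto
      have "\<Union>C \<in> hbF x0" unfolding hbF_def
      proof (intro CollectI conjI ballI allI)
        obtain A where "A \<in> C" using False by blast
        then show "(x0, norm x0) \<in> \<Union>C" using hbF_D(1) CF by blast
      next
        fix p q assume "p \<in> \<Union>C" "q \<in> \<Union>C"
        then obtain A B where AB: "A\<in>C" "B\<in>C" "p\<in>A" "q\<in>B" by blast
        then have "\<exists>E\<in>C. p\<in>E \<and> q\<in>E" using ch[OF AB(1,2)] by blast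
        then obtain E where E: "E\<in>C" "p\<in>E" "q\<in>E" by blast
        then have "E \<in> hbF x0" using CF by blast
        then have "(fst p + fst q, snd p + snd q) \<in> E" using E unfolding hbF_def by blast
        then show "(fst p + fst q, snd p + snd q) \<in> \<Union>C" using E by blast
      next
        fix p r assume "p \<in> \<Union>C"
        then obtain E where E: "E\<in>C" "p\<in>E" by blast
        then have "E \<in> hbF x0" using CF by blast
        then show "(r *\<^sub>R fst p, r * snd p) \<in> \<Union>C" using E unfolding hbF_def by blast
      next
        fix p assume "p \<in> \<Union>C"
        then obtain E where E: "E\<in>C" "p\<in>E" by blast
        then have "E \<in> hbF x0" using CF by blast
        then show "snd p \<le> norm (fst p)" using E unfolding hbF_def by blast
      qed
      then show ?thesis by blast
    qed
  qed
  from Zorn_Lemma2[OF this] obtain Hm where Hm: "Hm \<in> hbF x0"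
    and max: "\<forall>X\<in>hbF x0. Hm \<subseteq> X \<longrightarrow> X = Hm" by blast
  have tot: "\<exists>a. (y,a) \<in> Hm" for y
  proof (rule ccontr)
    assume "\<nexists>a. (y, a) \<in> Hm"
    then obtain H' where "H'\<in>hbF x0" "Hm \<subseteq> H'" "H' \<noteq> Hm" using hbF_extend[OF Hm] by blast
    with max show False by blast
  qed
  define f where "f y = (SOME a. (y,a) \<in> Hm)" for y
  have fH: "(y, f y) \<in> Hm" for y unfolding f_def using tot someI_ex by metis
  have fval: "(y,a)\<in>Hm \<Longrightarrow> f y = a" for y a using hbF_unique[OF Hm fH] by blast
  have fadd: "f (x + y) = f x + f y" for x y using fval hbF_D(2)[OF Hm fH fH] by blast
  have fscale: "f (r *\<^sub>R x) = r *\<^sub>R f x" for r x using fval hbF_D(3)[OF Hm fH] by simp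
  have fle: "f y \<le> norm y" for y using hbF_D(4)[OF Hm fH] .
  have fabs: "norm (f y) \<le> norm y * 1" for y
    using fle[of y] fle[of "-y"] fscale[of "-1" y] by auto
  have bl: "bounded_linear f" by (rule bounded_linear_intro[OF fadd fscale fabs])
  have "f x0 = norm x0" using fval hbF_D(1)[OF Hm] by blast
  moreover have "norm (Blinfun f) \<le> 1"
    by (rule norm_blinfun_bound) (use fabs in \<open>simp_all add: bounded_linear_Blinfun_apply[OF bl]\<close>)
  ultimately show ?thesis using bl bounded_linear_Blinfun_apply by metis
qed



lemma kappa_apply[simp]: "blinfun_apply (kappa x) f = blinfun_apply f x"
  unfolding kappa_def by (simp add: bounded_linear_Blinfun_apply)

lemma kappa_add: "kappa (x + y) = kappa x + kappa y"
  by (rule blinfun_eqI) (simp add: blinfun.add_right blinfun.add_left)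

lemma kappa_scale: "kappa (r *\<^sub>R x) = r *\<^sub>R kappa x"
  by (rule blinfun_eqI) (simp add: blinfun.scaleR_right blinfun.scaleR_left)

lemma norm_kappa_le: "norm (kappa x) \<le> norm x"
proof (rule norm_blinfun_bound)
  fix f :: "'a \<Rightarrow>\<^sub>L real"
  show "norm (blinfun_apply (kappa x) f) \<le> norm x * norm f"
    using norm_blinfun[of f x] by (simp add: mult.commute)
qed simp

lemma norm_kappa[simp]: "norm (kappa x) = norm x"
proof (rule antisym[OF norm_kappa_le])
  obtain f :: "'a \<Rightarrow>\<^sub>L real" where f: "norm f \<le> 1" "blinfun_apply f x = norm x"
    using hahn_banach_norm by blast
  have "norm x = norm (blinfun_apply (kappa x) f)" using f by simp
  also have "\<dots> \<le> norm (kappa x) * norm f" by (rule norm_blinfun)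
  also have "\<dots> \<le> norm (kappa x)" using f(1) by (simp add: mult_left_le)
  finally show "norm x \<le> norm (kappa x)" .
qed

lemma bounded_linear_kappa: "bounded_linear kappa"
  by (rule bounded_linear_intro[where K=1]) (auto simp: kappa_add kappa_scale)

lemma kappa_inj: "kappa x = kappa y \<Longrightarrow> x = y"
proof -
  assume "kappa x = kappa y"
  then have "kappa (x - y) = 0" using kappa_add[of "x - y" y] by simp
  then have "norm (x - y) = 0" using norm_kappa[of "x - y"] by simp
  then show "x = y" by simp
qed

lemma kappa_eqI: assumes "\<And>f::'a::real_normed_vector \<Rightarrow>\<^sub>L real. blinfun_apply f x = blinfun_apply f y" shows "x = y"
  by (rule kappa_inj, rule blinfun_eqI) (simp add: assms)

lemma Ptilde_apply[simp]: "blinfun_apply (Ptilde R xs) x = blinfun_apply (blinfun_apply R x) xs"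
  unfolding Ptilde_def by simp

locale AIA =
  fixes act :: "'g::{group_add,topological_space} \<Rightarrow> 'x::banach \<Rightarrow> 'x"
  assumes act: "affine_isometric_action act"
begin

abbreviation "lp \<equiv> lin_part act"

lemma act0: "act 0 x = x" and act_add: "act (g + h) x = act g (act h x)"
  and lp_lin: "linear (lp g)" and act_dist: "dist (act g x) (act g y) = dist x y"
  and act_cont: "continuous_on UNIV (\<lambda>p. act (fst p) (snd p))"
  using act unfolding affine_isometric_action_def lin_part_def[abs_def] by auto

lemma lp_apply: "lp g x = act g x - act g 0" unfolding lin_part_def ..

lemma lp_add: "lp g (x + y) = lp g x + lp g y"
  using lp_lin linear_add by blast
lemma lp_scale: "lp g (r *\<^sub>R x) = r *\<^sub>R lp g x"
  using lp_lin linear_scale by blast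
lemma lp_diff: "lp g (x - y) = lp g x - lp g y"
  using lp_lin linear_diff by blast
lemma lp_zero[simp]: "lp g 0 = 0" by (simp add: lp_apply)

lemma lp_norm[simp]: "norm (lp g x) = norm x"
  using act_dist[of g x 0] by (simp add: lp_apply dist_norm)

lemma lp_bl: "bounded_linear (lp g)"
  by (rule bounded_linear_intro[where K=1]) (auto simp: lp_add lp_scale)

lemma act_decomp: "act g x = lp g x + act g 0" by (simp add: lp_apply)

lemma lp_hom: "lp (g + h) x = lp g (lp h x)"
proof -
  have "lp (g + h) x = act g (act h x) - act g (act h 0)" by (simp add: lp_apply act_add)
  also have "\<dots> = lp g (act h x) - lp g (act h 0)" by (simp add: lp_apply)
  also have "\<dots> = lp g (act h x - act h 0)" by (simp add: lp_diff)
  finally show ?thesis by (simp add: lp_apply)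
qed

lemma lp0[simp]: "lp 0 x = x" by (simp add: lp_apply act0)

lemma lp_inv: "lp g (lp (-g) x) = x"
  using lp_hom[of g "-g" x] by simp
lemma lp_inv2: "lp (-g) (lp g x) = x"
  using lp_hom[of "-g" g x] by simp

lemma act_cont1: "continuous_on UNIV (\<lambda>g. act g x)"
proof -
  have "continuous_on UNIV ((\<lambda>p. act (fst p) (snd p)) \<circ> (\<lambda>g. (g, x)))"
    by (rule continuous_on_compose) (auto intro!: continuous_intros continuous_on_subset[OF act_cont])
  then show ?thesis by (simp add: o_def)
qed

lemma lp_cont1: "continuous_on UNIV (\<lambda>g. lp g x)"
  unfolding lp_apply by (intro continuous_intros act_cont1)

end

locale SA = AIA act for act :: "'g::{group_add,topological_space} \<Rightarrow> 'x::banach \<Rightarrow> 'x" +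
  fixes M :: "('g \<Rightarrow> real) \<Rightarrow> real"
    and D :: "('g \<Rightarrow> real) set"
  assumes bi: "bi_invariant_mean_on D M"
    and Dconst: "\<And>c. (\<lambda>_. c) \<in> D"
    and Dlin: "\<And>f h a b. f\<in>D \<Longrightarrow> h\<in>D \<Longrightarrow> (\<lambda>t. a*f t + b*h t) \<in> D"
    and Dorb: "\<And>xs x. (\<lambda>g. blinfun_apply xs (lin_part act g x)) \<in> D"
    and Dcoc: "\<And>xs. bounded (range (\<lambda>g. act g 0)) \<Longrightarrow> (\<lambda>g. blinfun_apply xs (act g 0)) \<in> D"
begin

lemma mean: "mean_on D M" and Mlinv: "\<And>g f. f\<in>D \<Longrightarrow> M (lshift g f) = M f"
  and Mrinv: "\<And>g f. f\<in>D \<Longrightarrow> M (rshift f g) = M f"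
  using bi unfolding bi_invariant_mean_on_def by auto

lemma M_lin: "f\<in>D \<Longrightarrow> h\<in>D \<Longrightarrow> M (\<lambda>t. a * f t + b * h t) = a * M f + b * M h"
  and M_pos: "f\<in>D \<Longrightarrow> (\<And>t. f t \<ge> 0) \<Longrightarrow> M f \<ge> 0"
  and M_one: "M (\<lambda>_. 1) = 1"
  using mean unfolding mean_on_def by auto

lemma M_const: "M (\<lambda>_. c) = c"
  using M_lin[OF Dconst Dconst, of c 1 0 1] M_one by simp

lemma M_add: "f\<in>D \<Longrightarrow> h\<in>D \<Longrightarrow> M (\<lambda>t. f t + h t) = M f + M h"
  using M_lin[of f h 1 1] by simp

lemma M_scale: "f\<in>D \<Longrightarrow> M (\<lambda>t. a * f t) = a * M f"
  using M_lin[of f f a 0] by simp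

lemma M_bound:
  assumes f: "f\<in>D" and b: "\<And>t. \<bar>f t\<bar> \<le> c" shows "\<bar>M f\<bar> \<le> c"
proof -
  have b1: "f t \<le> c" "- f t \<le> c" for t using b[of t] by linarith+
  have p1: "0 \<le> c * 1 + (-1) * f t" for t using b1(1)[of t] by simp
  have p2: "0 \<le> c * 1 + 1 * f t" for t using b1(2)[of t] by simp
  have "M (\<lambda>t. c * 1 + (-1) * f t) \<ge> 0"
    using p1 by (intro M_pos Dlin[OF Dconst f])
  moreover have "M (\<lambda>t. c * 1 + 1 * f t) \<ge> 0"
    using p2 by (intro M_pos Dlin[OF Dconst f])
  moreover have "M (\<lambda>t. c * 1 + (-1) * f t) = c - M f"
    using M_lin[OF Dconst[of 1] f, where a=c and b="-1"] M_one by simp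
  moreover have "M (\<lambda>t. c * 1 + 1 * f t) = c + M f"
    using M_lin[OF Dconst[of 1] f, where a=c and b=1] M_one by simp
  ultimately show ?thesis by linarith
qed

definition Rf :: "'x \<Rightarrow> ('x \<Rightarrow>\<^sub>L real) \<Rightarrow> real" where
  "Rf x xs = M (\<lambda>g. blinfun_apply xs (lp g x))"

lemma Rf_bound: "\<bar>Rf x xs\<bar> \<le> norm xs * norm x"
  unfolding Rf_def
proof (rule M_bound[OF Dorb])
  fix g
  show "\<bar>blinfun_apply xs (lp g x)\<bar> \<le> norm xs * norm x"
    using norm_blinfun[of xs "lp g x"] by simp
qed

lemma Rf_bl: "bounded_linear (Rf x)"
proof (rule bounded_linear_intro[where K="norm x"])
  fix a b :: "'x \<Rightarrow>\<^sub>L real"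
  show "Rf x (a + b) = Rf x a + Rf x b"
    unfolding Rf_def by (simp add: blinfun.add_left M_add[OF Dorb Dorb])
next
  fix r and a :: "'x \<Rightarrow>\<^sub>L real"
  show "Rf x (r *\<^sub>R a) = r *\<^sub>R Rf x a"
    unfolding Rf_def by (simp add: blinfun.scaleR_left M_scale[OF Dorb])
next
  fix a :: "'x \<Rightarrow>\<^sub>L real"
  show "norm (Rf x a) \<le> norm a * norm x" using Rf_bound by simp
qed

definition R0 :: "'x \<Rightarrow> ('x \<Rightarrow>\<^sub>L real) \<Rightarrow>\<^sub>L real" where
  "R0 x = Blinfun (Rf x)"

lemma R0_apply[simp]: "blinfun_apply (R0 x) xs = Rf x xs"
  unfolding R0_def using Rf_bl bounded_linear_Blinfun_apply by metis

lemma Rf_add: "Rf (x + y) xs = Rf x xs + Rf y xs"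
  unfolding Rf_def by (simp add: lp_add blinfun.add_right M_add[OF Dorb Dorb])

lemma Rf_scale: "Rf (r *\<^sub>R x) xs = r * Rf x xs"
  unfolding Rf_def by (simp add: lp_scale blinfun.scaleR_right M_scale[OF Dorb])

lemma R0_norm: "norm (R0 x) \<le> norm x"
proof (rule norm_blinfun_bound)
  fix xs
  show "norm (blinfun_apply (R0 x) xs) \<le> norm x * norm xs"
    using Rf_bound[of x xs] by (simp add: mult.commute)
qed simp

lemma R0_bl: "bounded_linear R0"
proof (rule bounded_linear_intro[where K=1])
  fix x y show "R0 (x + y) = R0 x + R0 y"
    by (rule blinfun_eqI) (simp add: Rf_add blinfun.add_left)
next
  fix r x show "R0 (r *\<^sub>R x) = r *\<^sub>R R0 x"
    by (rule blinfun_eqI) (simp add: Rf_scale blinfun.scaleR_left)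
next
  fix x show "norm (R0 x) \<le> norm x * 1" using R0_norm by simp
qed

definition RR :: "'x \<Rightarrow>\<^sub>L (('x \<Rightarrow>\<^sub>L real) \<Rightarrow>\<^sub>L real)" where
  "RR = Blinfun R0"

lemma RR_apply[simp]: "blinfun_apply (blinfun_apply RR x) xs = Rf x xs"
  unfolding RR_def using R0_bl bounded_linear_Blinfun_apply R0_apply by metis

lemma RR_eq: "blinfun_apply RR x = R0 x"
  unfolding RR_def using R0_bl bounded_linear_Blinfun_apply by metis

lemma norm_RR: "norm RR \<le> 1"
  by (rule norm_blinfun_bound) (simp_all add: RR_eq R0_norm)

lemma norm_RR_x: "norm (RR x) \<le> norm x"
  by (simp add: RR_eq R0_norm)

lemma dual_act_apply[simp]: "blinfun_apply (dual_act act g xs) y = blinfun_apply xs (lp (-g) y)"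
proof -
  have "bounded_linear (\<lambda>y. blinfun_apply xs (lp (-g) y))"
    using bounded_linear_compose[OF blinfun.bounded_linear_right[of xs] lp_bl[of "-g"]] by (simp add: o_def)
  then show ?thesis unfolding dual_act_def by (simp add: bounded_linear_Blinfun_apply)
qed

lemma Rf_dual: "Rf x (dual_act act (-g) xs) = Rf x xs"
proof -
  have "Rf x (dual_act act (-g) xs) = M (lshift (-g) (\<lambda>h. blinfun_apply xs (lp h x)))"
    unfolding Rf_def lshift_def by (simp add: lp_hom)
  then show ?thesis using Mlinv[OF Dorb] unfolding Rf_def by simp
qed

lemma Rf_lp: "Rf (lp g x) xs = Rf x xs"
proof -
  have "Rf (lp g x) xs = M (rshift (\<lambda>h. blinfun_apply xs (lp h x)) (-g))"
    unfolding Rf_def rshift_def by (simp add: lp_hom)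
  then show ?thesis using Mrinv[OF Dorb] unfolding Rf_def by simp
qed

lemma part1: "bidual_act act g (RR x) = RR x \<and> RR x = RR (lp g x)"
proof
  have "(\<lambda>xs. blinfun_apply (RR x) (dual_act act (- g) xs)) = blinfun_apply (RR x)"
    by (rule ext) (simp add: Rf_dual)
  then show "bidual_act act g (RR x) = RR x"
    unfolding bidual_act_def by (simp add: blinfun_apply_inverse)
  show "RR x = RR (lp g x)" by (rule blinfun_eqI) (simp add: Rf_lp)
qed

lemma fixed_iff: "x \<in> fixed_pts act \<longleftrightarrow> (\<forall>g. lp g x = x)"
  unfolding fixed_pts_def by simp

lemma R_fixed: "x \<in> fixed_pts act \<Longrightarrow> RR x = kappa x"
  by (rule blinfun_eqI) (simp add: Rf_def fixed_iff M_const)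

lemma part2: "range (blinfun_apply RR) \<inter> range kappa = kappa ` fixed_pts act"
proof
  show "kappa ` fixed_pts act \<subseteq> range (blinfun_apply RR) \<inter> range kappa"
    using R_fixed by (metis (no_types, lifting) image_subset_iff IntI rangeI)
next
  show "range (blinfun_apply RR) \<inter> range kappa \<subseteq> kappa ` fixed_pts act"
  proof
    fix w assume "w \<in> range (blinfun_apply RR) \<inter> range kappa"
    then obtain x z where w: "w = RR x" "w = kappa z" by blast
    have "lp g z = z" for g
    proof (rule kappa_eqI)
      fix xs :: "'x \<Rightarrow>\<^sub>L real"
      have kz: "kappa z = RR x" using w by simp
      have "blinfun_apply xs (lp g z) = blinfun_apply (dual_act act (-g) xs) z" by simp
      also have "\<dots> = blinfun_apply (kappa z) (dual_act act (-g) xs)" by simp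
      also have "\<dots> = blinfun_apply (RR x) (dual_act act (-g) xs)" by (simp only: kz)
      also have "\<dots> = blinfun_apply (RR x) xs" by (simp add: Rf_dual)
      also have "\<dots> = blinfun_apply (kappa z) xs" by (simp only: kz)
      also have "\<dots> = blinfun_apply xs z" by simp
      finally show "blinfun_apply xs (lp g z) = blinfun_apply xs z" .
    qed
    then show "w \<in> kappa ` fixed_pts act" using w fixed_iff by blast
  qed
qed

lemma RR_add: "RR (x + y) = RR x + RR y" by (simp add: blinfun.add_right)

lemma part3a: "{x. RR x = 0} \<inter> fixed_pts act = {0}"
proof -
  have "0 \<in> fixed_pts act" by (simp add: fixed_iff)
  moreover have "x = 0" if "RR x = 0" "x \<in> fixed_pts act" for x
    using that R_fixed[of x] norm_kappa[of x] by simp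
  ultimately show ?thesis by auto
qed

lemma part3b: "RR k = 0 \<Longrightarrow> y \<in> fixed_pts act \<Longrightarrow> norm y \<le> norm (k + y)"
  using RR_add[of k y] R_fixed[of y] norm_RR_x[of "k + y"] by simp

lemma dual_fixed_iff: "xs \<in> dual_fixed_pts act \<longleftrightarrow> (\<forall>g y. blinfun_apply xs (lp g y) = blinfun_apply xs y)"
proof
  assume "xs \<in> dual_fixed_pts act"
  then have "\<And>g. dual_act act g xs = xs" unfolding dual_fixed_pts_def by simp
  show "\<forall>g y. blinfun_apply xs (lp g y) = blinfun_apply xs y"
  proof (intro allI)
    fix g y
    have "blinfun_apply xs (lp g y) = blinfun_apply (dual_act act (-g) xs) y" by simp
    then show "blinfun_apply xs (lp g y) = blinfun_apply xs y" using \<open>\<And>g. dual_act act g xs = xs\<close> by simp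
  qed
next
  assume "\<forall>g y. blinfun_apply xs (lp g y) = blinfun_apply xs y"
  then have "\<And>g. dual_act act g xs = xs" by (intro blinfun_eqI) simp
  then show "xs \<in> dual_fixed_pts act" unfolding dual_fixed_pts_def by simp
qed

lemma Rf_dualfixed: "xs \<in> dual_fixed_pts act \<Longrightarrow> Rf y xs = blinfun_apply xs y"
  unfolding Rf_def dual_fixed_iff by (simp add: M_const)

lemma part4: "bounded_linear (Ptilde RR) \<and> (\<forall>xs. Ptilde RR (Ptilde RR xs) = Ptilde RR xs) \<and>
      (\<forall>xs. norm (Ptilde RR xs) \<le> norm xs) \<and> range (Ptilde RR) = dual_fixed_pts act"
proof (intro conjI allI)
  have nb: "norm (Ptilde RR xs) \<le> norm xs" for xs
  proof (rule norm_blinfun_bound)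
    fix x
    have "norm (blinfun_apply (Ptilde RR xs) x) = \<bar>Rf x xs\<bar>" by simp
    also have "\<dots> \<le> norm xs * norm x" by (rule Rf_bound)
    finally show "norm (blinfun_apply (Ptilde RR xs) x) \<le> norm xs * norm x" .
  qed simp
  show "bounded_linear (Ptilde RR)"
  proof (rule bounded_linear_intro[where K=1])
    fix a b show "Ptilde RR (a + b) = Ptilde RR a + Ptilde RR b"
      by (rule blinfun_eqI) (simp add: blinfun.add_right blinfun.add_left)
  next
    fix r a show "Ptilde RR (r *\<^sub>R a) = r *\<^sub>R Ptilde RR a"
      by (rule blinfun_eqI) (simp add: blinfun.scaleR_right blinfun.scaleR_left)
  next
    fix a show "norm (Ptilde RR a) \<le> norm a * 1" using nb by simp
  qed
  fix xs
  have fx: "Ptilde RR xs \<in> dual_fixed_pts act" for xs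
    unfolding dual_fixed_iff by (simp add: Rf_lp)
  show "Ptilde RR (Ptilde RR xs) = Ptilde RR xs"
    by (rule blinfun_eqI) (simp add: Rf_dualfixed[OF fx])
  show "norm (Ptilde RR xs) \<le> norm xs" by (rule nb)
next
  have fx: "Ptilde RR xs \<in> dual_fixed_pts act" for xs
    unfolding dual_fixed_iff by (simp add: Rf_lp)
  moreover have "xs \<in> range (Ptilde RR)" if "xs \<in> dual_fixed_pts act" for xs
  proof -
    have "Ptilde RR xs = xs" by (rule blinfun_eqI) (simp add: Rf_dualfixed[OF that])
    then show ?thesis by (metis rangeI)
  qed
  ultimately show "range (Ptilde RR) = dual_fixed_pts act" by blast
qed

lemma part5: "{x. RR x = 0} = pre_annihilator (dual_fixed_pts act)"
proof (intro set_eqI iffI)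
  fix x assume "x \<in> {x. RR x = 0}"
  then have "RR x = 0" by simp
  then have z: "Rf x xs = 0" for xs using RR_apply[of x xs] by simp
  show "x \<in> pre_annihilator (dual_fixed_pts act)"
    unfolding pre_annihilator_def
  proof (intro CollectI ballI)
    fix a assume "a \<in> dual_fixed_pts act"
    then show "blinfun_apply a x = 0" using Rf_dualfixed[of a x] z[of a] by simp
  qed
next
  fix x assume x: "x \<in> pre_annihilator (dual_fixed_pts act)"
  have "Ptilde RR xs \<in> dual_fixed_pts act" for xs
    unfolding dual_fixed_iff by (simp add: Rf_lp)
  then have "blinfun_apply (Ptilde RR xs) x = 0" for xs using x unfolding pre_annihilator_def by blast
  then have "Rf x xs = 0" for xs by simp
  then have "RR x = 0" by (intro blinfun_eqI) simp
  then show "x \<in> {x. RR x = 0}" by simp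
qed

end


fun pick :: "'x::real_normed_vector list \<Rightarrow> real \<Rightarrow> 'x \<Rightarrow> 'x" where
  "pick [] r y = 0"
| "pick (c#cs) r y = (if y \<in> ball c r then c else pick cs r y)"

lemma pick_close: "(\<exists>c\<in>set cs. dist c y < r) \<Longrightarrow> dist (pick cs r y) y < r"
  by (induction cs) (auto simp: mem_ball)

lemma pick_range: "pick cs r y \<in> insert 0 (set cs)"
  by (induction cs) auto

lemma pick_meas: "pick cs r \<in> borel_measurable borel"
proof (induction cs)
  case Nil
  have "pick [] r = (\<lambda>_. 0)" by (rule ext) simp
  then show ?case by simp
next
  case (Cons c cs)
  have "pick (c#cs) r = (\<lambda>y. if y \<in> ball c r then (\<lambda>_. c) y else pick cs r y)" by (rule ext) simp
  moreover have "(\<lambda>y. if y \<in> ball c r then (\<lambda>_. c) y else pick cs r y) \<in> borel_measurable borel"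
    by (rule measurable_If_set[OF measurable_const Cons.IH]) (simp_all add: borel_open)
  ultimately show ?case by simp
qed

lemma seq_bound_tendsto:
  fixes a :: "nat \<Rightarrow> 'a::metric_space"
  assumes "\<And>n. dist (a n) b \<le> 1 / real (Suc n)"
  shows "a \<longlonglongrightarrow> b"
proof -
  have "(\<lambda>n. dist (a n) b) \<longlonglongrightarrow> 0"
  proof (rule real_tendsto_sandwich[of "\<lambda>_. 0" _ _ "\<lambda>n. inverse (real (Suc n))"])
    show "\<forall>\<^sub>F n in sequentially. 0 \<le> dist (a n) b" by simp
    show "\<forall>\<^sub>F n in sequentially. dist (a n) b \<le> inverse (real (Suc n))"
      using assms by (simp add: inverse_eq_divide)
    show "(\<lambda>_. 0::real) \<longlonglongrightarrow> 0" by simp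
    show "(\<lambda>n. inverse (real (Suc n))) \<longlonglongrightarrow> 0" by (rule LIMSEQ_inverse_real_of_nat)
  qed
  then show ?thesis using tendsto_dist_iff by blast
qed

lemma kappa_diff: "kappa (a - b) = kappa a - kappa b"
  by (rule blinfun_eqI) (simp add: blinfun.diff_right blinfun.diff_left)

lemma dist_kappa: "dist (kappa a) (kappa b) = dist a b"
  by (simp only: dist_norm kappa_diff[symmetric] norm_kappa)

context SA
begin

lemma orbit_bounded_equiv:
  "(\<exists>x. bounded (range (\<lambda>g. act g x))) \<longleftrightarrow> (\<forall>x. bounded (range (\<lambda>g. act g x)))"
proof
  assume "\<exists>x. bounded (range (\<lambda>g. act g x))"
  then obtain x0 B where B: "\<And>g. norm (act g x0) \<le> B" unfolding bounded_iff by blast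
  show "\<forall>x. bounded (range (\<lambda>g. act g x))"
  proof
    fix x
    have "norm (act g x) \<le> B + norm (x - x0)" for g
    proof -
      have "norm (act g x) \<le> norm (act g x0) + norm (act g x - act g x0)"
        using norm_triangle_ineq[of "act g x0" "act g x - act g x0"] by simp
      also have "norm (act g x - act g x0) = norm (x - x0)"
        using act_dist[of g x x0] by (simp add: dist_norm)
      finally show ?thesis using B[of g] by simp
    qed
    then show "bounded (range (\<lambda>g. act g x))" unfolding bounded_iff by blast
  qed
next
  assume "\<forall>x. bounded (range (\<lambda>g. act g x))"
  then show "\<exists>x. bounded (range (\<lambda>g. act g x))" by blast
qed

lemma Rf_coc:
  assumes bd: "bounded (range (\<lambda>g. act g 0))"
  shows "Rf (act g 0) xs = 0"
proof -
  define F where "F = (\<lambda>h. blinfun_apply xs (act h 0))"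
  have FD: "F \<in> D" unfolding F_def by (rule Dcoc[OF bd])
  have eq: "rshift F (-g) = (\<lambda>h. 1 * blinfun_apply xs (lp h (act g 0)) + 1 * F h)"
    unfolding rshift_def F_def by (rule ext) (simp add: lp_apply act_add blinfun.diff_right)
  have rD: "rshift F (-g) \<in> D" unfolding eq by (intro Dlin Dorb FD)
  have "Rf (act g 0) xs = M (\<lambda>h. 1 * rshift F (-g) h + (-1) * F h)"
    unfolding Rf_def by (simp add: eq)
  also have "\<dots> = 1 * M (rshift F (-g)) + (-1) * M F" by (rule M_lin[OF rD FD])
  also have "\<dots> = 0" using Mrinv[OF FD] by simp
  finally show ?thesis .
qed

lemma partA:
  assumes "\<exists>x. bounded (range (\<lambda>g. act g x))"
  shows "(\<forall>g x. RR (act g x) = RR x) \<and> (\<forall>xs g x. Ptilde RR xs (act g x) = Ptilde RR xs x)"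
proof -
  have bd: "bounded (range (\<lambda>g. act g 0))" using orbit_bounded_equiv assms by blast
  have R: "RR (act g x) = RR x" for g x
  proof (rule blinfun_eqI)
    fix xs
    have "Rf (act g x) xs = Rf (lp g x) xs + Rf (act g 0) xs"
      by (subst act_decomp[of g x]) (rule Rf_add)
    then show "blinfun_apply (RR (act g x)) xs = blinfun_apply (RR x) xs"
      using Rf_lp Rf_coc[OF bd] by simp
  qed
  then show ?thesis by simp
qed

lemma partB:
  fixes \<mu> :: "'g measure"
  assumes cpt: "compact (UNIV :: 'g set)" and H: "Haar_probability \<mu>"
    and MI: "\<forall>f\<in>D. M f = integral\<^sup>L \<mu> f"
  shows "\<exists>T :: 'x \<Rightarrow> 'x. (\<forall>x. RR x = kappa (T x)) \<and>
           bounded_linear T \<and> (\<forall>x. T (T x) = T x) \<and> range T = fixed_pts act \<and>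
           (\<forall>x. norm (T x) \<le> norm x) \<and>
           (\<forall>x. has_bochner_int \<mu> (\<lambda>g. lin_part act g x) (T x))"
proof -
  have sp: "space \<mu> = UNIV" and se: "sets \<mu> = sets borel" and one: "emeasure \<mu> UNIV = 1"
    using H unfolding Haar_probability_def left_Haar_def by auto
  have fmu: "finite_measure \<mu>" by (rule finite_measureI) (simp add: sp one)
  interpret finite_measure \<mu> by (rule fmu)
  have mcong: "measurable \<mu> N = measurable borel N" for N :: "'b measure"
    by (rule measurable_cong_sets[OF se refl])
  have meas1: "measure \<mu> UNIV = 1" by (simp add: measure_def one)
  have ex: "\<exists>v. kappa v = RR x \<and> has_bochner_int \<mu> (\<lambda>g. lp g x) v" for x
  proof -
    define f where "f = (\<lambda>g. lp g x)"
    have fc: "continuous_on UNIV f" unfolding f_def by (rule lp_cont1)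
    have fm: "f \<in> borel_measurable \<mu>" unfolding mcong by (rule borel_measurable_continuous_onI[OF fc])
    have K: "compact (range f)" by (rule compact_continuous_image[OF fc cpt])
    have "\<exists>cs. range f \<subseteq> (\<Union>c\<in>set cs. ball c (1 / real (Suc n)))" for n
    proof -
      have "\<exists>k. finite k \<and> range f \<subseteq> (\<Union>c\<in>k. ball c (1 / real (Suc n)))"
        using K unfolding compact_eq_totally_bounded by simp
      then obtain k where "finite k" "range f \<subseteq> (\<Union>c\<in>k. ball c (1 / real (Suc n)))" by blast
      then show ?thesis using finite_list by metis
    qed
    then obtain cs where cs: "\<And>n. range f \<subseteq> (\<Union>c\<in>set (cs n). ball c (1 / real (Suc n)))" by metis
    define s where "s n g = pick (cs n) (1 / real (Suc n)) (f g)" for n g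
    have close: "dist (s n g) (f g) < 1 / real (Suc n)" for n g
      unfolding s_def
    proof (rule pick_close)
      have "f g \<in> range f" by simp
      then have "f g \<in> (\<Union>c\<in>set (cs n). ball c (1 / real (Suc n)))" using cs[of n] by blast
      then obtain c where "c \<in> set (cs n)" "f g \<in> ball c (1 / real (Suc n))" by blast
      then show "\<exists>c\<in>set (cs n). dist c (f g) < 1 / real (Suc n)" by (auto simp: mem_ball)
    qed
    have sm: "s n \<in> borel_measurable \<mu>" for n
      using measurable_comp[OF fm pick_meas] unfolding s_def by (simp add: o_def)
    have sf: "simple_fn \<mu> (s n)" for n
      unfolding simple_fn_def
    proof (intro conjI allI impI)
      show "finite (range (s n))"
        by (rule finite_subset[of _ "insert 0 (set (cs n))"]) (unfold s_def, use pick_range in blast, simp)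
      fix y
      show "s n -` {y} \<inter> space \<mu> \<in> sets \<mu>"
        by (rule measurable_sets[OF sm borel_closed[OF closed_singleton]])
      show "emeasure \<mu> (s n -` {y} \<inter> space \<mu>) < \<infinity>"
        using emeasure_finite by (simp add: less_top[symmetric])
    qed
    have conv: "(\<lambda>n. s n t) \<longlonglongrightarrow> f t" for t
      by (rule seq_bound_tendsto) (use close in \<open>simp add: less_imp_le\<close>)
    have l1: "(\<lambda>n. \<integral>\<^sup>+t. ennreal (norm (s n t - f t)) \<partial>\<mu>) \<longlonglongrightarrow> 0"
    proof (rule tendsto_sandwich[of "\<lambda>_. 0" _ _ "\<lambda>n. ennreal (inverse (real (Suc n)))"])
      show "\<forall>\<^sub>F n in sequentially. 0 \<le> (\<integral>\<^sup>+t. ennreal (norm (s n t - f t)) \<partial>\<mu>)" by simp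
      show "\<forall>\<^sub>F n in sequentially. (\<integral>\<^sup>+t. ennreal (norm (s n t - f t)) \<partial>\<mu>) \<le> ennreal (inverse (real (Suc n)))"
      proof (rule always_eventually, rule allI)
        fix n
        have "(\<integral>\<^sup>+t. ennreal (norm (s n t - f t)) \<partial>\<mu>) \<le> (\<integral>\<^sup>+t. ennreal (inverse (real (Suc n))) \<partial>\<mu>)"
        proof (rule nn_integral_mono)
          fix t
          show "ennreal (norm (s n t - f t)) \<le> ennreal (inverse (real (Suc n)))"
            using close[of n t] by (intro ennreal_leI) (simp add: dist_norm inverse_eq_divide)
        qed
        also have "\<dots> = ennreal (inverse (real (Suc n)))" by (simp add: sp one)
        finally show "(\<integral>\<^sup>+t. ennreal (norm (s n t - f t)) \<partial>\<mu>) \<le> ennreal (inverse (real (Suc n)))" .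
      qed
      show "(\<lambda>_. 0::ennreal) \<longlonglongrightarrow> 0" by simp
      show "(\<lambda>n. ennreal (inverse (real (Suc n)))) \<longlonglongrightarrow> 0"
        using tendsto_ennrealI[OF LIMSEQ_inverse_real_of_nat] by simp
    qed
    have xsm: "blinfun_apply xs \<in> borel_measurable borel" for xs :: "'x \<Rightarrow>\<^sub>L real"
      by (rule borel_measurable_continuous_onI, rule linear_continuous_on, rule blinfun.bounded_linear_right)
    have int_s: "integrable \<mu> (\<lambda>t. blinfun_apply xs (s n t))" for xs :: "'x \<Rightarrow>\<^sub>L real" and n
    proof (rule finite_measure.integrable_const_bound[OF fmu, where B="norm xs * (norm (f undefined) + 1)"])
      show "(\<lambda>t. blinfun_apply xs (s n t)) \<in> borel_measurable \<mu>"
        using measurable_comp[OF sm xsm] by (simp add: o_def)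
      show "AE t in \<mu>. norm (blinfun_apply xs (s n t)) \<le> norm xs * (norm (f undefined) + 1)"
      proof (rule AE_I2)
        fix t
        have d: "norm (s n t - f t) < 1 / real (Suc n)" using close[of n t] by (simp add: dist_norm)
        have d1: "1 / real (Suc n) \<le> 1" by simp
        have "norm (s n t) \<le> norm (f t) + norm (s n t - f t)"
          using norm_triangle_ineq[of "f t" "s n t - f t"] by simp
        moreover have "norm (f t) = norm (f undefined)" unfolding f_def by simp
        ultimately have ns: "norm (s n t) \<le> norm (f undefined) + 1" using d d1 by linarith
        have "norm (blinfun_apply xs (s n t)) \<le> norm xs * norm (s n t)" by (rule norm_blinfun)
        also have "\<dots> \<le> norm xs * (norm (f undefined) + 1)" by (rule mult_left_mono[OF ns]) simp
        finally show "norm (blinfun_apply xs (s n t)) \<le> norm xs * (norm (f undefined) + 1)" .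
      qed
    qed
    have int_f: "integrable \<mu> (\<lambda>t. blinfun_apply xs (f t))" for xs :: "'x \<Rightarrow>\<^sub>L real"
    proof (rule finite_measure.integrable_const_bound[OF fmu, where B="norm xs * norm x"])
      show "(\<lambda>t. blinfun_apply xs (f t)) \<in> borel_measurable \<mu>"
        using measurable_comp[OF fm xsm] by (simp add: o_def)
      show "AE t in \<mu>. norm (blinfun_apply xs (f t)) \<le> norm xs * norm x"
      proof (rule AE_I2)
        fix t
        show "norm (blinfun_apply xs (f t)) \<le> norm xs * norm x"
          using norm_blinfun[of xs "f t"] unfolding f_def by simp
      qed
    qed
    have sint: "blinfun_apply xs (simple_int \<mu> (s n)) = integral\<^sup>L \<mu> (\<lambda>t. blinfun_apply xs (s n t))" for xs :: "'x \<Rightarrow>\<^sub>L real" and n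
    proof -
      let ?A = "range (s n)"
      have fin: "finite ?A" using sf[of n] unfolding simple_fn_def by blast
      have As: "s n -` {y} \<inter> space \<mu> \<in> sets \<mu>" for y using sf[of n] unfolding simple_fn_def by blast
      have eqf: "(\<lambda>t. blinfun_apply xs (s n t)) =
          (\<lambda>t. \<Sum>y\<in>?A. indicator (s n -` {y} \<inter> space \<mu>) t * blinfun_apply xs y)"
      proof (rule ext)
        fix t
        have "(\<Sum>y\<in>?A. indicator (s n -` {y} \<inter> space \<mu>) t * blinfun_apply xs y) =
            (\<Sum>y\<in>?A. if s n t = y then blinfun_apply xs y else 0)"
          by (rule sum.cong) (auto simp: indicator_def sp)
        also have "\<dots> = blinfun_apply xs (s n t)" using fin by simp
        finally show "blinfun_apply xs (s n t) =
            (\<Sum>y\<in>?A. indicator (s n -` {y} \<inter> space \<mu>) t * blinfun_apply xs y)" by simp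
      qed
      have "integral\<^sup>L \<mu> (\<lambda>t. blinfun_apply xs (s n t)) =
          (\<Sum>y\<in>?A. integral\<^sup>L \<mu> (\<lambda>t. indicator (s n -` {y} \<inter> space \<mu>) t * blinfun_apply xs y))"
        unfolding eqf
        by (rule Bochner_Integration.integral_sum) (intro Bochner_Integration.integrable_mult_left integrable_real_indicator As,
            use emeasure_finite in \<open>simp add: less_top[symmetric]\<close>)
      also have "\<dots> = (\<Sum>y\<in>?A. measure \<mu> (s n -` {y} \<inter> space \<mu>) * blinfun_apply xs y)"
        by (simp add: sp)
      also have "\<dots> = blinfun_apply xs (simple_int \<mu> (s n))"
        unfolding simple_int_def by (simp add: blinfun.sum_right blinfun.scaleR_right)
      finally show ?thesis by simp
    qed
    have approx: "\<bar>blinfun_apply xs (simple_int \<mu> (s n)) - Rf x xs\<bar> \<le> 1 / real (Suc n) * norm xs" for xs :: "'x \<Rightarrow>\<^sub>L real" and n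
    proof -
      have Rfi: "Rf x xs = integral\<^sup>L \<mu> (\<lambda>t. blinfun_apply xs (f t))"
        using MI Dorb unfolding Rf_def f_def by simp
      have "\<bar>blinfun_apply xs (simple_int \<mu> (s n)) - Rf x xs\<bar> =
          norm (integral\<^sup>L \<mu> (\<lambda>t. blinfun_apply xs (s n t) - blinfun_apply xs (f t)))"
        by (simp add: sint Rfi int_s int_f)
      also have "\<dots> \<le> integral\<^sup>L \<mu> (\<lambda>t. norm (blinfun_apply xs (s n t) - blinfun_apply xs (f t)))"
        by (rule integral_norm_bound)
      also have "\<dots> \<le> integral\<^sup>L \<mu> (\<lambda>t. 1 / real (Suc n) * norm xs)"
      proof (rule integral_mono)
        show "integrable \<mu> (\<lambda>t. norm (blinfun_apply xs (s n t) - blinfun_apply xs (f t)))"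
          using int_s int_f by simp
        show "integrable \<mu> (\<lambda>t. 1 / real (Suc n) * norm xs)" by simp
        fix t
        have "norm (blinfun_apply xs (s n t) - blinfun_apply xs (f t)) = norm (blinfun_apply xs (s n t - f t))"
          by (simp add: blinfun.diff_right)
        also have "\<dots> \<le> norm xs * norm (s n t - f t)" by (rule norm_blinfun)
        also have "\<dots> \<le> norm xs * (1 / real (Suc n))"
          using close[of n t] by (intro mult_left_mono) (simp_all add: dist_norm)
        finally show "norm (blinfun_apply xs (s n t) - blinfun_apply xs (f t)) \<le> 1 / real (Suc n) * norm xs"
          by (simp add: mult.commute)
      qed
      also have "\<dots> = 1 / real (Suc n) * norm xs" using meas1 by (simp add: sp)
      finally show ?thesis .
    qed
    define v where "v n = simple_int \<mu> (s n)" for n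
    have dn: "dist (kappa (v n)) (RR x) \<le> 1 / real (Suc n)" for n
      unfolding dist_norm
      by (rule norm_blinfun_bound) (use approx in \<open>simp_all add: blinfun.diff_left v_def\<close>)
    have kconv: "(\<lambda>n. kappa (v n)) \<longlonglongrightarrow> RR x" by (rule seq_bound_tendsto[OF dn])
    have "Cauchy (\<lambda>n. kappa (v n))" by (rule LIMSEQ_imp_Cauchy[OF kconv])
    then have "Cauchy v" unfolding Cauchy_def by (simp add: dist_kappa)
    then obtain w where vw: "v \<longlonglongrightarrow> w" using Cauchy_convergent_iff convergent_def by blast
    have "(\<lambda>n. kappa (v n)) \<longlonglongrightarrow> kappa w"
      by (rule bounded_linear.tendsto[OF bounded_linear_kappa vw])
    then have kw: "kappa w = RR x" using kconv LIMSEQ_unique by blast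
    have conv': "AE t in \<mu>. (\<lambda>n. s n t) \<longlonglongrightarrow> lp t x"
      using conv unfolding f_def by (intro AE_I2) blast
    have l1': "(\<lambda>n. \<integral>\<^sup>+t. ennreal (norm (s n t - lp t x)) \<partial>\<mu>) \<longlonglongrightarrow> 0"
      using l1 unfolding f_def .
    have vw': "(\<lambda>n. simple_int \<mu> (s n)) \<longlonglongrightarrow> w" using vw unfolding v_def .
    have "has_bochner_int \<mu> (\<lambda>g. lp g x) w"
      unfolding has_bochner_int_def using sf conv' l1' vw' by blast
    with kw show ?thesis by blast
  qed
  define T where "T x = (THE v. kappa v = RR x)" for x
  have TR: "kappa (T x) = RR x" for x
  proof -
    obtain v where "kappa v = RR x" using ex by blast
    then have "\<exists>!v. kappa v = RR x"
    proof (intro ex1I[of _ v])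
      fix y assume "kappa y = RR x" "kappa v = RR x"
      then show "y = v" using kappa_inj[of y v] by simp
    qed
    then show ?thesis unfolding T_def by (rule theI')
  qed
  have Tfix: "T x \<in> fixed_pts act" for x
  proof -
    have "kappa (T x) \<in> range (blinfun_apply RR) \<inter> range kappa" using TR by (metis IntI rangeI)
    then have "kappa (T x) \<in> kappa ` fixed_pts act" by (simp only: part2)
    then obtain z where "z \<in> fixed_pts act" "kappa (T x) = kappa z" by blast
    then show ?thesis using kappa_inj[of "T x" z] by simp
  qed
  have Tid: "x \<in> fixed_pts act \<Longrightarrow> T x = x" for x
    using TR[of x] R_fixed[of x] kappa_inj[of "T x" x] by simp
  have Tadd: "T (x + y) = T x + T y" for x y
    by (rule kappa_inj) (simp add: kappa_add TR blinfun.add_right)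
  have Tscale: "T (r *\<^sub>R x) = r *\<^sub>R T x" for r x
    by (rule kappa_inj) (simp add: kappa_scale TR blinfun.scaleR_right)
  have Tnorm: "norm (T x) \<le> norm x" for x
    using norm_kappa[of "T x"] TR[of x] norm_RR_x[of x] by simp
  have "bounded_linear T"
    by (rule bounded_linear_intro[where K=1]) (use Tadd Tscale Tnorm in auto)
  moreover have "\<forall>x. T (T x) = T x" using Tid Tfix by blast
  moreover have "range T = fixed_pts act"
  proof
    show "range T \<subseteq> fixed_pts act" using Tfix by blast
    show "fixed_pts act \<subseteq> range T" using Tid by (metis rangeI subsetI)
  qed
  moreover have "has_bochner_int \<mu> (\<lambda>g. lin_part act g x) (T x)" for x
  proof -
    obtain v where v: "kappa v = RR x" "has_bochner_int \<mu> (\<lambda>g. lp g x) v" using ex by blast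
    then have "T x = v" using TR[of x] kappa_inj[of "T x" v] by simp
    then show ?thesis using v by simp
  qed
  moreover have "\<forall>x. RR x = kappa (T x)" using TR by simp
  moreover have "\<forall>x. norm (T x) \<le> norm x" using Tnorm by blast
  ultimately show ?thesis by blast
qed

end


lemma my_open_vimage: "continuous_on UNIV f \<Longrightarrow> open B \<Longrightarrow> open (f -` B)"
  using continuous_on_open_vimage[of UNIV f] by simp

lemma bounded_lin_comb:
  fixes f h :: "'a \<Rightarrow> real"
  assumes "bounded (range f)" "bounded (range h)"
  shows "bounded (range (\<lambda>t. a * f t + b * h t))"
proof -
  obtain B1 where B1: "\<And>t. norm (f t) \<le> B1" using assms(1) unfolding bounded_iff by blast
  obtain B2 where B2: "\<And>t. norm (h t) \<le> B2" using assms(2) unfolding bounded_iff by blast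
  have "norm (a * f t + b * h t) \<le> \<bar>a\<bar> * B1 + \<bar>b\<bar> * B2" for t
  proof -
    have "\<bar>a * f t + b * h t\<bar> \<le> \<bar>a * f t\<bar> + \<bar>b * h t\<bar>" by (rule abs_triangle_ineq)
    also have "\<dots> = \<bar>a\<bar> * \<bar>f t\<bar> + \<bar>b\<bar> * \<bar>h t\<bar>" by (simp add: abs_mult)
    also have "\<dots> \<le> \<bar>a\<bar> * B1 + \<bar>b\<bar> * B2"
      using B1[of t] B2[of t] by (intro add_mono mult_left_mono) auto
    finally show ?thesis by simp
  qed
  then show ?thesis unfolding bounded_iff by blast
qed

lemma snc_lin:
  assumes "sup_norm_continuous F" "sup_norm_continuous G"
  shows "sup_norm_continuous (\<lambda>x h. a * F x h + b * G x h)"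
  unfolding sup_norm_continuous_def
proof (intro allI impI)
  fix x0 and e :: real assume e: "e > 0"
  have pos: "\<bar>a\<bar> + \<bar>b\<bar> + 1 > 0" by (simp add: add_nonneg_pos)
  define e' where "e' = e / (\<bar>a\<bar> + \<bar>b\<bar> + 1)"
  have e': "e' > 0" unfolding e'_def using e pos by simp
  have "\<forall>\<^sub>F x in nhds x0. \<forall>h. \<bar>F x h - F x0 h\<bar> \<le> e'" using assms(1) e' unfolding sup_norm_continuous_def by blast
  moreover have "\<forall>\<^sub>F x in nhds x0. \<forall>h. \<bar>G x h - G x0 h\<bar> \<le> e'" using assms(2) e' unfolding sup_norm_continuous_def by blast
  ultimately show "\<forall>\<^sub>F x in nhds x0. \<forall>h. \<bar>(a * F x h + b * G x h) - (a * F x0 h + b * G x0 h)\<bar> \<le> e"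
  proof eventually_elim
    case (elim x)
    show ?case
    proof
      fix h
      have "\<bar>(a * F x h + b * G x h) - (a * F x0 h + b * G x0 h)\<bar> = \<bar>a * (F x h - F x0 h) + b * (G x h - G x0 h)\<bar>"
        by (simp add: algebra_simps)
      also have "\<dots> \<le> \<bar>a * (F x h - F x0 h)\<bar> + \<bar>b * (G x h - G x0 h)\<bar>" by (rule abs_triangle_ineq)
      also have "\<dots> = \<bar>a\<bar> * \<bar>F x h - F x0 h\<bar> + \<bar>b\<bar> * \<bar>G x h - G x0 h\<bar>" by (simp add: abs_mult)
      also have "\<dots> \<le> \<bar>a\<bar> * e' + \<bar>b\<bar> * e'" using elim by (intro add_mono mult_left_mono) auto
      also have "\<dots> \<le> (\<bar>a\<bar> + \<bar>b\<bar> + 1) * e'" using e' by (simp add: algebra_simps)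
      also have "\<dots> = e" unfolding e'_def using pos by simp
      finally show "\<bar>(a * F x h + b * G x h) - (a * F x0 h + b * G x0 h)\<bar> \<le> e" .
    qed
  qed
qed

lemma Cbu_const: "(\<lambda>_. c) \<in> Cb_u"
proof -
  have "sup_norm_continuous (\<lambda>x::'a. (\<lambda>_::'a. c::real))"
    unfolding sup_norm_continuous_def by simp
  then show ?thesis unfolding Cb_u_def Cb_lu_def Cb_ru_def lshift_def rshift_def by simp
qed

lemma Cbu_lin:
  assumes "f \<in> Cb_u" "h \<in> Cb_u"
  shows "(\<lambda>t. a * f t + b * h t) \<in> Cb_u"
proof -
  have b: "bounded (range f)" "bounded (range h)"
    and l: "sup_norm_continuous (\<lambda>x. lshift (-x) f)" "sup_norm_continuous (\<lambda>x. lshift (-x) h)"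
    and r: "sup_norm_continuous (\<lambda>x. rshift f (-x))" "sup_norm_continuous (\<lambda>x. rshift h (-x))"
    using assms unfolding Cb_u_def Cb_lu_def Cb_ru_def by auto
  have "(\<lambda>x. lshift (-x) (\<lambda>t. a * f t + b * h t)) = (\<lambda>x k. a * lshift (-x) f k + b * lshift (-x) h k)"
    by (simp add: lshift_def)
  moreover have "(\<lambda>x. rshift (\<lambda>t. a * f t + b * h t) (-x)) = (\<lambda>x k. a * rshift f (-x) k + b * rshift h (-x) k)"
    by (simp add: rshift_def)
  ultimately show ?thesis unfolding Cb_u_def Cb_lu_def Cb_ru_def
    using bounded_lin_comb[OF b] snc_lin[OF l] snc_lin[OF r] by simp
qed

lemma SIN_orbit:
  fixes \<phi> :: "'g::{group_add,topological_space} \<Rightarrow> 'x::real_normed_vector"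
    and xs :: "'x \<Rightarrow>\<^sub>L real"
  assumes tg: "top_group TYPE('g)" and sin: "SIN_group TYPE('g)"
    and cont: "continuous_on UNIV \<phi>"
    and iso: "\<And>h a b. norm (\<phi> (h + a) - \<phi> (h + b)) = norm (\<phi> a - \<phi> b)"
    and bd: "bounded (range \<phi>)"
  shows "(\<lambda>h. blinfun_apply xs (\<phi> h)) \<in> Cb_u"
proof -
  define f where "f = (\<lambda>h. blinfun_apply xs (\<phi> h))"
  define c where "c = norm xs + 1"
  have c: "c > 0" unfolding c_def using norm_ge_zero[of xs] by linarith
  have fd: "\<bar>f a - f b\<bar> \<le> c * norm (\<phi> a - \<phi> b)" for a b
  proof -
    have "\<bar>f a - f b\<bar> = norm (blinfun_apply xs (\<phi> a - \<phi> b))" by (simp add: f_def blinfun.diff_right)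
    also have "\<dots> \<le> norm xs * norm (\<phi> a - \<phi> b)" by (rule norm_blinfun)
    also have "\<dots> \<le> c * norm (\<phi> a - \<phi> b)" unfolding c_def by (intro mult_right_mono) auto
    finally show ?thesis .
  qed
  have bf: "bounded (range f)"
  proof -
    obtain B where B: "\<And>h. norm (\<phi> h) \<le> B" using bd unfolding bounded_iff by blast
    have "norm (f h) \<le> norm xs * B" for h
    proof -
      have "norm (f h) \<le> norm xs * norm (\<phi> h)" unfolding f_def by (rule norm_blinfun)
      also have "\<dots> \<le> norm xs * B" by (rule mult_left_mono[OF B]) simp
      finally show ?thesis .
    qed
    then show ?thesis unfolding bounded_iff by blast
  qed
  have ac: "continuous_on UNIV (\<lambda>p::'g\<times>'g. fst p + snd p)" using tg unfolding top_group_def by blast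
  have addc: "continuous_on UNIV (\<lambda>x::'g. a + x)" for a
  proof -
    have "continuous_on UNIV ((\<lambda>p::'g\<times>'g. fst p + snd p) \<circ> (\<lambda>x. (a, x)))"
      by (rule continuous_on_compose) (auto intro!: continuous_intros continuous_on_subset[OF ac])
    then show ?thesis by (simp add: o_def)
  qed
  have ru: "sup_norm_continuous (\<lambda>x. rshift f (-x))"
    unfolding sup_norm_continuous_def
  proof (intro allI impI)
    fix x0 and e :: real assume e: "e > 0"
    define S where "S = \<phi> -` ball (\<phi> x0) (e / c)"
    have "open S" unfolding S_def by (rule my_open_vimage[OF cont open_ball])
    moreover have "x0 \<in> S" unfolding S_def using e c by simp
    moreover have "\<forall>h. \<bar>rshift f (-x) h - rshift f (-x0) h\<bar> \<le> e" if "x \<in> S" for x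
    proof
      fix h
      have dx: "dist (\<phi> x0) (\<phi> x) < e / c" using that unfolding S_def by simp
      then have dx': "norm (\<phi> x - \<phi> x0) \<le> e / c" by (simp add: dist_norm norm_minus_commute)
      have "\<bar>rshift f (-x) h - rshift f (-x0) h\<bar> = \<bar>f (h + x) - f (h + x0)\<bar>" by (simp add: rshift_def)
      also have "\<dots> \<le> c * norm (\<phi> (h + x) - \<phi> (h + x0))" by (rule fd)
      also have "\<dots> = c * norm (\<phi> x - \<phi> x0)" by (simp only: iso)
      also have "\<dots> \<le> c * (e / c)" using dx' c by (intro mult_left_mono) auto
      also have "\<dots> = e" using c by simp
      finally show "\<bar>rshift f (-x) h - rshift f (-x0) h\<bar> \<le> e" .
    qed
    ultimately show "\<forall>\<^sub>F x in nhds x0. \<forall>h. \<bar>rshift f (-x) h - rshift f (-x0) h\<bar> \<le> e"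
      unfolding eventually_nhds by blast
  qed
  have lu: "sup_norm_continuous (\<lambda>x. lshift (-x) f)"
    unfolding sup_norm_continuous_def
  proof (intro allI impI)
    fix x0 and e :: real assume e: "e > 0"
    define U where "U = \<phi> -` ball (\<phi> 0) (e / c)"
    have "open U" unfolding U_def by (rule my_open_vimage[OF cont open_ball])
    moreover have "0 \<in> U" unfolding U_def using e c by simp
    ultimately have "is_nbhd_of U 0" unfolding is_nbhd_of_def by blast
    then obtain V where V: "is_nbhd_of V 0" "V \<subseteq> U" "\<And>g. (\<lambda>v. g + v + - g) ` V = V"
      using sin unfolding SIN_group_def by blast
    then obtain W where W: "open W" "0 \<in> W" "W \<subseteq> V" unfolding is_nbhd_of_def by blast
    define S where "S = (\<lambda>x. -x0 + x) -` W"
    have "open S" unfolding S_def by (rule my_open_vimage[OF addc W(1)])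
    moreover have "x0 \<in> S" unfolding S_def using W(2) by simp
    moreover have "\<forall>h. \<bar>lshift (-x) f h - lshift (-x0) f h\<bar> \<le> e" if "x \<in> S" for x
    proof
      fix h
      define v where "v = -x0 + x"
      have vV: "v \<in> V" using that W unfolding S_def v_def by auto
      define v' where "v' = -h + v + h"
      have "v' \<in> (\<lambda>v. (-h) + v + - (-h)) ` V" unfolding v'_def using vV by auto
      then have "v' \<in> V" using V(3)[of "-h"] by simp
      then have "v' \<in> U" using V(2) by blast
      then have "dist (\<phi> 0) (\<phi> v') < e / c" unfolding U_def by simp
      then have dv: "norm (\<phi> v' - \<phi> 0) \<le> e / c" by (simp add: dist_norm norm_minus_commute)
      have eq1: "x + h = (x0 + h) + v'" unfolding v'_def v_def by (simp add: add.assoc)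
      have "\<bar>lshift (-x) f h - lshift (-x0) f h\<bar> = \<bar>f ((x0 + h) + v') - f ((x0 + h) + 0)\<bar>"
        unfolding lshift_def minus_minus eq1 by simp
      also have "\<dots> \<le> c * norm (\<phi> ((x0 + h) + v') - \<phi> ((x0 + h) + 0))" by (rule fd)
      also have "\<dots> = c * norm (\<phi> v' - \<phi> 0)" by (simp only: iso)
      also have "\<dots> \<le> c * (e / c)" using dv c by (intro mult_left_mono) auto
      also have "\<dots> = e" using c by simp
      finally show "\<bar>lshift (-x) f h - lshift (-x0) f h\<bar> \<le> e" .
    qed
    ultimately show "\<forall>\<^sub>F x in nhds x0. \<forall>h. \<bar>lshift (-x) f h - lshift (-x0) f h\<bar> \<le> e"
      unfolding eventually_nhds by blast
  qed
  have "f \<in> Cb_u" unfolding Cb_u_def Cb_lu_def Cb_ru_def using bf lu ru by blast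
  then show ?thesis by (simp add: f_def)
qed

lemma Linf_const: "(\<lambda>_. c) \<in> Linf_repr \<mu>"
  unfolding Linf_repr_def by simp

lemma Linf_lin:
  assumes "f \<in> Linf_repr \<mu>" "h \<in> Linf_repr \<mu>"
  shows "(\<lambda>t. a * f t + b * h t) \<in> Linf_repr \<mu>"
  using assms bounded_lin_comb[of f h a b] unfolding Linf_repr_def by auto

lemma Linf_cont:
  fixes \<phi> :: "'g::topological_space \<Rightarrow> 'x::real_normed_vector" and xs :: "'x \<Rightarrow>\<^sub>L real"
  assumes se: "sets \<mu> = sets borel" and cont: "continuous_on UNIV \<phi>" and bd: "bounded (range \<phi>)"
  shows "(\<lambda>h. blinfun_apply xs (\<phi> h)) \<in> Linf_repr \<mu>"
proof -
  have c2: "continuous_on UNIV (blinfun_apply xs \<circ> \<phi>)"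
    by (rule continuous_on_compose[OF cont linear_continuous_on[OF blinfun.bounded_linear_right]])
  have "(\<lambda>h. blinfun_apply xs (\<phi> h)) \<in> borel_measurable borel"
    using borel_measurable_continuous_onI[OF c2] by (simp add: o_def)
  have m: "(\<lambda>h. blinfun_apply xs (\<phi> h)) \<in> borel_measurable \<mu>"
  proof -
    have "borel_measurable \<mu> = (borel_measurable borel :: ('g \<Rightarrow> real) set)"
      by (rule measurable_cong_sets[OF se refl])
    with \<open>(\<lambda>h. blinfun_apply xs (\<phi> h)) \<in> borel_measurable borel\<close> show ?thesis by simp
  qed
  obtain B where B: "\<And>h. norm (\<phi> h) \<le> B" using bd unfolding bounded_iff by blast
  have "norm (blinfun_apply xs (\<phi> h)) \<le> norm xs * B" for h
  proof -
    have "norm (blinfun_apply xs (\<phi> h)) \<le> norm xs * norm (\<phi> h)" by (rule norm_blinfun)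
    also have "\<dots> \<le> norm xs * B" by (rule mult_left_mono[OF B]) simp
    finally show ?thesis .
  qed
  then have "bounded (range (\<lambda>h. blinfun_apply xs (\<phi> h)))" unfolding bounded_iff by blast
  with m show ?thesis unfolding Linf_repr_def by blast
qed

context AIA
begin

lemma orb_iso: "norm (lp (h + a) y - lp (h + b) y) = norm (lp a y - lp b y)"
  by (simp add: lp_hom lp_diff[symmetric])

lemma coc_iso: "norm (act (h + a) 0 - act (h + b) 0) = norm (act a 0 - act b 0)"
  using act_dist[of h "act a 0" "act b 0"] by (simp add: act_add dist_norm)

lemma orb_bounded: "bounded (range (\<lambda>g. lp g y))"
  unfolding bounded_iff by (intro exI[of _ "norm y"]) simp

end



theorem lemma3p2:
  fixes act :: "'g::{group_add,t2_space} \<Rightarrow> 'x::banach \<Rightarrow> 'x"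
    and M :: "('g \<Rightarrow> real) \<Rightarrow> real"
    and D :: "('g \<Rightarrow> real) set"
  assumes G: "top_group TYPE('g)" "amenable TYPE('g)"
    and act: "affine_isometric_action act"
    and mean: "(SIN_group TYPE('g) \<and> D = Cb_u) \<or>
               (locally_compact_space (euclidean :: 'g topology) \<and>
                 (\<exists>\<mu>. left_Haar \<mu> \<and> D = Linf_repr \<mu> \<and> respects_ae \<mu> D M))"
    and bi: "bi_invariant_mean_on D M"
  shows "\<exists>R :: 'x \<Rightarrow>\<^sub>L (('x \<Rightarrow>\<^sub>L real) \<Rightarrow>\<^sub>L real).
     (\<forall>x xs. blinfun_apply (blinfun_apply R x) xs = M (\<lambda>g. blinfun_apply xs (lin_part act g x))) \<and>
     norm R \<le> 1 \<and>
     \<comment> \<open>(1)\<close>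
     (\<forall>g x. bidual_act act g (R x) = R x \<and> R x = R (lin_part act g x)) \<and>
     \<comment> \<open>(2)\<close>
     (range (blinfun_apply R) \<inter> range kappa = kappa ` fixed_pts act) \<and>
     (\<forall>x\<in>fixed_pts act. R x = kappa x) \<and>
     \<comment> \<open>(3)\<close>
     ({x. R x = 0} \<inter> fixed_pts act = {0}) \<and>
     (\<forall>k y. R k = 0 \<longrightarrow> y \<in> fixed_pts act \<longrightarrow> norm y \<le> norm (k + y)) \<and>
     \<comment> \<open>(4)\<close>
     (bounded_linear (Ptilde R) \<and> (\<forall>xs. Ptilde R (Ptilde R xs) = Ptilde R xs) \<and>
      (\<forall>xs. norm (Ptilde R xs) \<le> norm xs) \<and> range (Ptilde R) = dual_fixed_pts act) \<and>
     \<comment> \<open>(5)\<close>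
     ({x. R x = 0} = pre_annihilator (dual_fixed_pts act)) \<and>
     \<comment> \<open>(a)\<close>
     ((\<exists>x. bounded (range (\<lambda>g. act g x))) \<longleftrightarrow> (\<forall>x. bounded (range (\<lambda>g. act g x)))) \<and>
     ((\<exists>x. bounded (range (\<lambda>g. act g x))) \<longrightarrow>
        (\<forall>g x. R (act g x) = R x) \<and>
        (\<forall>xs g x. Ptilde R xs (act g x) = Ptilde R xs x)) \<and>
     \<comment> \<open>(b)\<close>
     (\<forall>\<mu>. compact (UNIV :: 'g set) \<and> Haar_probability \<mu> \<and> (\<forall>f\<in>D. M f = integral\<^sup>L \<mu> f) \<longrightarrow>
        (\<exists>T :: 'x \<Rightarrow> 'x. (\<forall>x. R x = kappa (T x)) \<and>
           bounded_linear T \<and> (\<forall>x. T (T x) = T x) \<and> range T = fixed_pts act \<and>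
           (\<forall>x. norm (T x) \<le> norm x) \<and>
           (\<forall>x. has_bochner_int \<mu> (\<lambda>g. lin_part act g x) (T x))))"
proof -
  interpret AIA act by (rule AIA.intro[OF act])
  have DP: "(\<forall>c. (\<lambda>_. c) \<in> D) \<and> (\<forall>f h a b. f\<in>D \<longrightarrow> h\<in>D \<longrightarrow> (\<lambda>t. a*f t + b*h t) \<in> D) \<and>
      (\<forall>xs x. (\<lambda>g. blinfun_apply xs (lin_part act g x)) \<in> D) \<and>
      (\<forall>xs. bounded (range (\<lambda>g. act g 0)) \<longrightarrow> (\<lambda>g. blinfun_apply xs (act g 0)) \<in> D)"
    using mean
  proof
    assume A: "SIN_group TYPE('g) \<and> D = Cb_u"
    then have sin: "SIN_group TYPE('g)" and DD: "D = Cb_u" by auto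
    have "(\<lambda>g. blinfun_apply xs (lin_part act g x)) \<in> Cb_u" for xs x
    proof (rule SIN_orbit[where \<phi>="\<lambda>g. lin_part act g x", OF G(1) sin])
      show "continuous_on UNIV (\<lambda>g. lin_part act g x)" by (rule lp_cont1)
      show "norm (lin_part act (h + a) x - lin_part act (h + b) x) = norm (lin_part act a x - lin_part act b x)" for h a b
        by (rule orb_iso)
      show "bounded (range (\<lambda>g. lin_part act g x))" by (rule orb_bounded)
    qed
    moreover have "(\<lambda>g. blinfun_apply xs (act g 0)) \<in> Cb_u"
      if "bounded (range (\<lambda>g. act g 0))" for xs
    proof (rule SIN_orbit[where \<phi>="\<lambda>g. act g 0", OF G(1) sin])
      show "continuous_on UNIV (\<lambda>g. act g 0)" by (rule act_cont1)
      show "norm (act (h + a) 0 - act (h + b) 0) = norm (act a 0 - act b 0)" for h a b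
        by (rule coc_iso)
      show "bounded (range (\<lambda>g. act g 0))" by (rule that)
    qed
    ultimately show ?thesis unfolding DD using Cbu_const Cbu_lin by blast
  next
    assume "locally_compact_space (euclidean :: 'g topology) \<and>
                 (\<exists>\<mu>. left_Haar \<mu> \<and> D = Linf_repr \<mu> \<and> respects_ae \<mu> D M)"
    then have "\<exists>\<mu>. left_Haar \<mu> \<and> D = Linf_repr \<mu> \<and> respects_ae \<mu> D M" by (rule conjunct2)
    then obtain \<mu> where mu3: "left_Haar \<mu> \<and> D = Linf_repr \<mu> \<and> respects_ae \<mu> D M" ..
    have mu: "left_Haar \<mu>" using mu3 by (rule conjunct1)
    have DD: "D = Linf_repr \<mu>" using mu3 by (elim conjE) assumption
    have se: "sets \<mu> = sets borel" using conjunct1[OF conjunct2[OF mu[unfolded left_Haar_def]]] .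
    have "(\<lambda>g. blinfun_apply xs (lin_part act g x)) \<in> Linf_repr \<mu>" for xs x
      by (rule Linf_cont[where \<phi>="\<lambda>g. lin_part act g x", OF se lp_cont1 orb_bounded])
    moreover have "(\<lambda>g. blinfun_apply xs (act g 0)) \<in> Linf_repr \<mu>"
      if "bounded (range (\<lambda>g. act g 0))" for xs
      by (rule Linf_cont[where \<phi>="\<lambda>g. act g 0", OF se act_cont1 that])
    ultimately show ?thesis unfolding DD using Linf_const Linf_lin by blast
  qed
  interpret SA act M D
  proof (rule SA.intro)
    show "AIA act" by (rule AIA.intro[OF act])
    show "SA_axioms act M D" by (rule SA_axioms.intro) (use bi DP in blast)+
  qed
  have c1: "\<forall>x xs. blinfun_apply (blinfun_apply RR x) xs = M (\<lambda>g. blinfun_apply xs (lin_part act g x))"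
    by (simp add: Rf_def)
  have c3: "\<forall>g x. bidual_act act g (RR x) = RR x \<and> RR x = RR (lin_part act g x)"
    using part1 by blast
  have c4: "\<forall>x\<in>fixed_pts act. RR x = kappa x" using R_fixed by blast
  have c5: "\<forall>k y. RR k = 0 \<longrightarrow> y \<in> fixed_pts act \<longrightarrow> norm y \<le> norm (k + y)" using part3b by blast
  have c8: "(\<exists>x. bounded (range (\<lambda>g. act g x))) \<longrightarrow>
        (\<forall>g x. RR (act g x) = RR x) \<and>
        (\<forall>xs g x. Ptilde RR xs (act g x) = Ptilde RR xs x)" using partA by blast
  have c9: "\<forall>\<mu>. compact (UNIV :: 'g set) \<and> Haar_probability \<mu> \<and> (\<forall>f\<in>D. M f = integral\<^sup>L \<mu> f) \<longrightarrow>
        (\<exists>T :: 'x \<Rightarrow> 'x. (\<forall>x. RR x = kappa (T x)) \<and>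
           bounded_linear T \<and> (\<forall>x. T (T x) = T x) \<and> range T = fixed_pts act \<and>
           (\<forall>x. norm (T x) \<le> norm x) \<and>
           (\<forall>x. has_bochner_int \<mu> (\<lambda>g. lin_part act g x) (T x)))"
  proof (intro allI impI)
    fix \<mu> :: "'g measure"
    assume "compact (UNIV :: 'g set) \<and> Haar_probability \<mu> \<and> (\<forall>f\<in>D. M f = integral\<^sup>L \<mu> f)"
    then show "\<exists>T :: 'x \<Rightarrow> 'x. (\<forall>x. RR x = kappa (T x)) \<and>
           bounded_linear T \<and> (\<forall>x. T (T x) = T x) \<and> range T = fixed_pts act \<and>
           (\<forall>x. norm (T x) \<le> norm x) \<and>
           (\<forall>x. has_bochner_int \<mu> (\<lambda>g. lin_part act g x) (T x))"
      by (elim conjE) (rule partB; assumption)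
  qed
  have p4a: "bounded_linear (Ptilde RR)" using part4 by (elim conjE)
  have p4b: "\<forall>xs. Ptilde RR (Ptilde RR xs) = Ptilde RR xs" using part4 by (elim conjE)
  have p4c: "\<forall>xs. norm (Ptilde RR xs) \<le> norm xs" using part4 by (elim conjE)
  have p4d: "range (Ptilde RR) = dual_fixed_pts act" using part4 by (elim conjE)
  show ?thesis
    using c1 norm_RR c3 part2 c4 part3a c5 p4a p4b p4c p4d part5 orbit_bounded_equiv c8 c9
    by (intro exI[of _ RR] conjI) assumption+
qed


end
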